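(* Let $N\in\mathbb N$. For all nonzero $f,g\in R_J(N)$, $$\nu_J(fg)=\nu_J(f)+\nu_J(g),$$ where the right-hand side is the Minkowski sum of subsets of $\mathbb R^2$.
   Context: $R(N)=\mathbb C[\zeta^{1/N},\zeta^{-1/N}]((q^{1/N}))$ is the ring of formal series $f=\sum_{n,r\in\frac1N\mathbb Z}c(n,r)q^n\zeta^r$ such that for each $n$ only finitely many $r$ have $c(n,r)\ne0$ and $n$ is bounded below on the support $\operatorname{supp}(f)=\{(n,r): c(n,r)\neq0\}$. $R_J(N)$ is the set of $f\in R(N)$ for which there exist $a>0$ and $b,c\in\mathbb R$ with $\operatorname{supp}(f)\subseteq\{(n,r)\in\mathbb R^2: n\ge ar^2+br+c\}$ (it is a subring of $R(N)$). For $P\subseteq\mathbb R^2$, $\operatorname{conv}(P;\vec A)=\operatorname{conv}(P)+[0,\infty)\times\{0\}$. The Jacobi valuation is $\nu_J(f)=\operatorname{Closure}_{\mathbb R^2}(\operatorname{conv}(\operatorname{supp}(f);\vec A))$. *)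

theory Defs
  imports "HOL-Analysis.Analysis"
begin

text \<open>A formal series f = sum c(n,r) q^n zeta^r is represented by its coefficient
function c :: real \<times> real \<Rightarrow> complex, (n,r) \<mapsto> c(n,r).\<close>

type_synonym fseries = "real \<times> real \<Rightarrow> complex"

definition supp :: "fseries \<Rightarrow> (real \<times> real) set" where
  "supp f = {p. f p \<noteq> 0}"

definition in_R :: "nat \<Rightarrow> fseries \<Rightarrow> bool" where
  "in_R N f \<longleftrightarrow>
     supp f \<subseteq> {(of_int a / real N, of_int b / real N) | a b. True} \<and>
     (\<forall>n. finite {r. f (n, r) \<noteq> 0}) \<and>
     (\<exists>m. \<forall>n r. f (n, r) \<noteq> 0 \<longrightarrow> m \<le> n)"

definition in_RJ :: "nat \<Rightarrow> fseries \<Rightarrow> bool" where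
  "in_RJ N f \<longleftrightarrow> in_R N f \<and>
     (\<exists>a b c. a > (0::real) \<and> (\<forall>n r. f (n, r) \<noteq> 0 \<longrightarrow> n \<ge> a * r\<^sup>2 + b * r + c))"

text \<open>Product of formal series (Cauchy product); for elements of R(N) the
  summation set is finite.\<close>
definition fmult :: "fseries \<Rightarrow> fseries \<Rightarrow> fseries" where
  "fmult f g = (\<lambda>x. \<Sum>p\<in>{p. f p \<noteq> 0 \<and> g (x - p) \<noteq> 0}. f p * g (x - p))"

definition minkowski :: "(real \<times> real) set \<Rightarrow> (real \<times> real) set \<Rightarrow> (real \<times> real) set" where
  "minkowski A B = {a + b | a b. a \<in> A \<and> b \<in> B}"

definition conv_A :: "(real \<times> real) set \<Rightarrow> (real \<times> real) set" where
  "conv_A P = minkowski (convex hull P) ({0..} \<times> {0})"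

definition nu_J :: "fseries \<Rightarrow> (real \<times> real) set" where
  "nu_J f = closure (conv_A (supp f))"

end

theory Submission
  imports Defs "HOL-Analysis.Analysis"
begin

lemma mink_eq: "minkowski A B = (\<Union>x\<in>A. \<Union>y\<in>B. {x+y})"
  unfolding minkowski_def by blast

lemma convex_mink: "convex A \<Longrightarrow> convex B \<Longrightarrow> convex (minkowski A B)"
  unfolding mink_eq by (rule convex_sums)

lemma convex_ray: "convex ({0::real..} \<times> {0::real})"
  by (intro convex_Times) auto

lemma convex_conv_A: "convex (conv_A S)"
  unfolding conv_A_def by (intro convex_mink convex_ray convex_convex_hull)

lemma conv_A_ray: "x \<in> conv_A S \<Longrightarrow> 0 \<le> s \<Longrightarrow> x + (s,0) \<in> conv_A S"
  unfolding conv_A_def minkowski_def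
  by clarsimp (metis (no_types, lifting) add.assoc add_nonneg_nonneg prod.collapse add_Pair add_0_right)

lemma nu_ray:
  assumes "x \<in> closure (conv_A S)" "0 \<le> s"
  shows "x + (s,0) \<in> closure (conv_A S)"
proof -
  have "(+) (s,0) ` conv_A S \<subseteq> conv_A S" using conv_A_ray[OF _ assms(2)] by (auto simp: add.commute)
  hence "closure ((+) (s,0) ` conv_A S) \<subseteq> closure (conv_A S)" by (rule closure_mono)
  moreover have "(s,0) + x \<in> closure ((+) (s,0) ` conv_A S)"
    unfolding closure_translation using assms(1) by blast
  ultimately show ?thesis by (auto simp: add.commute)
qed

lemma nu_sub:
  assumes "closed C" "convex C" "S \<subseteq> C" "\<And>x s. x \<in> C \<Longrightarrow> 0 \<le> s \<Longrightarrow> x + (s,0) \<in> C"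
  shows "closure (conv_A S) \<subseteq> C"
proof (rule closure_minimal[OF _ assms(1)])
  have h: "convex hull S \<subseteq> C" by (rule hull_minimal[of S C convex, OF assms(3) assms(2)])
  show "conv_A S \<subseteq> C"
    unfolding conv_A_def minkowski_def using h assms(4) by fastforce
qed

lemma sub_nu: "S \<subseteq> closure (conv_A S)"
proof -
  have "S \<subseteq> conv_A S"
  proof
    fix p assume "p \<in> S"
    hence "p \<in> convex hull S" by (rule hull_inc)
    moreover have "(0::real\<times>real) \<in> {0..} \<times> {0}" by (simp add: zero_prod_def)
    moreover have "p = p + 0" by simp
    ultimately show "p \<in> conv_A S" unfolding conv_A_def minkowski_def
      by (smt (verit) mem_Collect_eq)
  qed
  thus ?thesis using closure_subset by blast
qed

lemma convex_nu: "convex (closure (conv_A S))"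
  by (intro convex_closure convex_conv_A)

lemma quad_bound:
  fixes A B C r :: real
  assumes "A > 0" "A * r^2 + B * r + C \<le> 0"
  shows "\<bar>r\<bar> \<le> (\<bar>B\<bar> + \<bar>C\<bar>) / A + 1"
proof (rule ccontr)
  let ?R = "(\<bar>B\<bar> + \<bar>C\<bar>) / A + 1"
  assume "\<not> ?thesis"
  hence r: "\<bar>r\<bar> > ?R" by simp
  have R1: "?R \<ge> 1" using assms(1) by (simp add: divide_nonneg_pos)
  have "A * \<bar>r\<bar> > A * ?R" using r assms(1) by simp
  also have "A * ?R = \<bar>B\<bar> + \<bar>C\<bar> + A" using assms(1) by (simp add: field_simps)
  finally have k: "A * \<bar>r\<bar> > \<bar>B\<bar> + \<bar>C\<bar>" using assms(1) by linarith
  have "A * r^2 = (A * \<bar>r\<bar>) * \<bar>r\<bar>" by (simp add: power2_eq_square abs_mult_self_eq)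
  also have "\<dots> \<ge> (\<bar>B\<bar> + \<bar>C\<bar>) * \<bar>r\<bar>" using k by (intro mult_right_mono) auto
  finally have "A * r^2 \<ge> \<bar>B\<bar> * \<bar>r\<bar> + \<bar>C\<bar> * \<bar>r\<bar>" by (simp add: algebra_simps)
  moreover have "\<bar>C\<bar> * \<bar>r\<bar> \<ge> \<bar>C\<bar>" using r R1 by (simp add: mult_le_cancel_left1)
  moreover have "\<bar>B\<bar> * \<bar>r\<bar> \<ge> - B * r" by (simp add: abs_mult[symmetric])
  moreover have "A * r^2 > (\<bar>B\<bar> + \<bar>C\<bar>) * \<bar>r\<bar>" using k r R1
    by (smt (verit) mult_strict_right_mono \<open>A * r\<^sup>2 = A * \<bar>r\<bar> * \<bar>r\<bar>\<close>)
  ultimately show False using assms(2) by (smt (verit, best) distrib_right)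
qed

lemma RJ_facts:
  assumes "in_RJ N f"
  obtains m a b c where "a > 0"
    "\<And>p. f p \<noteq> 0 \<Longrightarrow> m \<le> fst p"
    "\<And>p. f p \<noteq> 0 \<Longrightarrow> a * (snd p)^2 + b * snd p + c \<le> fst p"
    "\<And>p. f p \<noteq> 0 \<Longrightarrow> \<exists>i j. p = (of_int i / real N, of_int j / real N)"
proof -
  from assms obtain m a b c where "a > 0" and m: "\<forall>n r. f (n, r) \<noteq> 0 \<longrightarrow> m \<le> n"
    and q: "\<forall>n r. f (n, r) \<noteq> 0 \<longrightarrow> n \<ge> a * r\<^sup>2 + b * r + c"
    and s: "supp f \<subseteq> {(of_int a / real N, of_int b / real N) | a b. True}"
    unfolding in_RJ_def in_R_def by blast
  show ?thesis
  proof (rule that[of a m b c])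
    show "0 < a" by fact
    fix p assume "f p \<noteq> 0"
    then show "m \<le> fst p" "a * (snd p)^2 + b * snd p + c \<le> fst p"
      using m q by (metis prod.collapse)+
    from \<open>f p \<noteq> 0\<close> have "p \<in> supp f" by (simp add: supp_def)
    with s show "\<exists>i j. p = (of_int i / real N, of_int j / real N)" by blast
  qed
qed

lemma lat_fin:
  assumes "N > 0"
  shows "finite {p. (\<exists>i j. p = (of_int i / real N, of_int j / real N)) \<and> \<bar>fst p\<bar> \<le> B \<and> \<bar>snd p\<bar> \<le> B}"
proof -
  define k where "k = \<lceil>B * real N\<rceil>"
  have "{p. (\<exists>i j. p = (of_int i / real N, of_int j / real N)) \<and> \<bar>fst p\<bar> \<le> B \<and> \<bar>snd p\<bar> \<le> B}
        \<subseteq> (\<lambda>(i,j). (of_int i / real N, of_int j / real N)) ` ({-k..k} \<times> {-k..k})"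
  proof
    fix p assume "p \<in> {p. (\<exists>i j. p = (of_int i / real N, of_int j / real N)) \<and> \<bar>fst p\<bar> \<le> B \<and> \<bar>snd p\<bar> \<le> B}"
    hence pm: "\<exists>i j. p = (of_int i / real N, of_int j / real N)" and pb: "\<bar>fst p\<bar> \<le> B" "\<bar>snd p\<bar> \<le> B"
      by simp_all
    from pm obtain i j where p: "p = (of_int i / real N, of_int j / real N)" by iprover
    have b1: "\<bar>of_int i / real N\<bar> \<le> B" using pb(1) unfolding p by simp
    have b2: "\<bar>of_int j / real N\<bar> \<le> B" using pb(2) unfolding p by simp
    have Np: "real N > 0" using assms by simp
    have "\<bar>of_int i\<bar> / real N \<le> B" using b1 Np by (simp add: abs_divide)
    hence "\<bar>of_int i\<bar> \<le> B * real N" by (simp only: pos_divide_le_eq[OF Np])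
    hence "of_int \<bar>i\<bar> \<le> (of_int k :: real)" unfolding k_def of_int_abs
      using le_of_int_ceiling[of "B * real N"] by linarith
    hence i: "\<bar>i\<bar> \<le> k" by (simp only: of_int_le_iff)
    have "\<bar>of_int j\<bar> / real N \<le> B" using b2 Np by (simp add: abs_divide)
    hence "\<bar>of_int j\<bar> \<le> B * real N" by (simp only: pos_divide_le_eq[OF Np])
    hence "of_int \<bar>j\<bar> \<le> (of_int k :: real)" unfolding k_def of_int_abs
      using le_of_int_ceiling[of "B * real N"] by linarith
    hence j: "\<bar>j\<bar> \<le> k" by (simp only: of_int_le_iff)
    have ij: "(i,j) \<in> {-k..k} \<times> {-k..k}" using i j by (simp add: abs_le_iff)
    show "p \<in> (\<lambda>(i,j). (of_int i / real N, of_int j / real N)) ` ({-k..k} \<times> {-k..k})"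
      by (rule image_eqI[OF _ ij]) (simp add: p)
  qed
  moreover have "finite ((\<lambda>(i,j). (of_int i / real N, of_int j / real N)) ` ({-k..k} \<times> {-k..k}))"
    by (intro finite_imageI finite_cartesian_product finite_atLeastAtMost_int)
  ultimately show ?thesis by (rule finite_subset)
qed

lemma fin_below:
  assumes "in_RJ N f" "N > 0" "\<alpha> > 0"
  shows "finite {p. f p \<noteq> 0 \<and> \<alpha> * fst p + \<beta> * snd p \<le> K}"
proof -
  obtain m a b c where a: "a > 0" and m: "\<And>p. f p \<noteq> 0 \<Longrightarrow> m \<le> fst p"
    and q: "\<And>p. f p \<noteq> 0 \<Longrightarrow> a * (snd p)^2 + b * snd p + c \<le> fst p"
    and l: "\<And>p. f p \<noteq> 0 \<Longrightarrow> \<exists>i j. p = (of_int i / real N, of_int j / real N)"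
    using RJ_facts[OF assms(1)] by metis
  define R where "R = (\<bar>\<alpha>*b + \<beta>\<bar> + \<bar>\<alpha>*c - K\<bar>) / (\<alpha>*a) + 1"
  define B where "B = \<bar>m\<bar> + (\<bar>K\<bar> + \<bar>\<beta>\<bar> * R) / \<alpha> + R"
  have R0: "R \<ge> 0" unfolding R_def using a assms(3) by (simp add: divide_nonneg_pos)
  have "{p. f p \<noteq> 0 \<and> \<alpha> * fst p + \<beta> * snd p \<le> K} \<subseteq>
    {p. (\<exists>i j. p = (of_int i / real N, of_int j / real N)) \<and> \<bar>fst p\<bar> \<le> B \<and> \<bar>snd p\<bar> \<le> B}"
  proof safe
    fix n r assume fp: "f (n,r) \<noteq> 0" and L: "\<alpha> * fst (n,r) + \<beta> * snd (n,r) \<le> K"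
    show "\<exists>i j. (n,r) = (of_int i / real N, of_int j / real N)" using l[OF fp] .
    have mn: "m \<le> n" using m[OF fp] by simp
    have qn: "a * r^2 + b * r + c \<le> n" using q[OF fp] by simp
    have L': "\<alpha> * n + \<beta> * r \<le> K" using L by simp
    have "\<alpha> * (a * r^2 + b * r + c) \<le> \<alpha> * n" using qn assms(3) by simp
    hence "(\<alpha>*a) * r^2 + (\<alpha>*b + \<beta>) * r + (\<alpha>*c - K) \<le> 0" using L' by (simp add: algebra_simps)
    hence rR: "\<bar>r\<bar> \<le> R" unfolding R_def by (rule quad_bound[rotated]) (use a assms(3) in simp)
    have "\<alpha> * n \<le> K - \<beta> * r" using L' by simp
    also have "\<dots> \<le> \<bar>K\<bar> + \<bar>\<beta>\<bar> * R"
      using rR abs_mult[of \<beta> r] mult_left_mono[OF rR, of "\<bar>\<beta>\<bar>"]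
      by (smt (verit) abs_ge_self abs_ge_minus_self abs_ge_zero)
    finally have "n \<le> (\<bar>K\<bar> + \<bar>\<beta>\<bar> * R) / \<alpha>" using assms(3) by (simp add: pos_le_divide_eq mult.commute)
    moreover have "(\<bar>K\<bar> + \<bar>\<beta>\<bar> * R) / \<alpha> \<ge> 0" using R0 assms(3) by (simp add: divide_nonneg_pos)
    ultimately show "\<bar>fst (n,r)\<bar> \<le> B" using mn R0 unfolding B_def by simp
    show "\<bar>snd (n,r)\<bar> \<le> B" using rR R0 assms(3) \<open>(\<bar>K\<bar> + \<bar>\<beta>\<bar> * R) / \<alpha> \<ge> 0\<close> unfolding B_def
      by (simp only: snd_conv)
  qed
  thus ?thesis by (rule finite_subset) (rule lat_fin[OF assms(2)])
qed

lemma min_exists: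
  assumes "in_RJ N f" "N > 0" "\<alpha> > 0" "f \<noteq> (\<lambda>_. 0)"
  obtains p where "f p \<noteq> 0"
    "\<And>p'. f p' \<noteq> 0 \<Longrightarrow> \<alpha> * fst p + \<beta> * snd p \<le> \<alpha> * fst p' + \<beta> * snd p'"
    "\<And>p'. f p' \<noteq> 0 \<Longrightarrow> \<alpha> * fst p' + \<beta> * snd p' = \<alpha> * fst p + \<beta> * snd p \<Longrightarrow> snd p \<le> snd p'"
proof -
  define L where "L = (\<lambda>x::real\<times>real. \<alpha> * fst x + \<beta> * snd x)"
  obtain p0 where p0: "f p0 \<noteq> 0" using assms(4) by (auto simp: fun_eq_iff)
  define S where "S = {p. f p \<noteq> 0 \<and> \<alpha> * fst p + \<beta> * snd p \<le> L p0}"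
  have finS: "finite S" unfolding S_def by (rule fin_below[OF assms(1-3)])
  have p0S: "p0 \<in> S" using p0 unfolding S_def L_def by simp
  define M where "M = Min (L ` S)"
  have "M \<in> L ` S" unfolding M_def using finS p0S by (intro Min_in) auto
  then obtain p1 where p1S: "p1 \<in> S" and p1M: "L p1 = M" by auto
  have Mle: "\<And>x. x \<in> S \<Longrightarrow> M \<le> L x" unfolding M_def using finS by simp
  define T where "T = {x \<in> S. L x = M}"
  have finT: "finite T" using finS unfolding T_def by simp
  have p1T: "p1 \<in> T" using p1S p1M unfolding T_def by simp
  define m2 where "m2 = Min (snd ` T)"
  have "m2 \<in> snd ` T" unfolding m2_def using finT p1T by (intro Min_in) auto
  then obtain p where pT: "p \<in> T" and pm: "snd p = m2" by auto
  have m2le: "\<And>x. x \<in> T \<Longrightarrow> m2 \<le> snd x" unfolding m2_def using finT by simp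
  have pS: "p \<in> S" and pL: "L p = M" using pT unfolding T_def by auto
  show ?thesis
  proof (rule that)
    show "f p \<noteq> 0" using pS unfolding S_def by simp
    have main: "L p \<le> L p'" if "f p' \<noteq> 0" for p'
    proof (cases "L p' \<le> L p0")
      case True
      hence "p' \<in> S" using that unfolding S_def L_def by simp
      thus ?thesis using Mle pL by simp
    next
      case False
      have "L p \<le> L p0" using pS unfolding S_def L_def by simp
      thus ?thesis using False by simp
    qed
    fix p' assume fp': "f p' \<noteq> 0"
    show "\<alpha> * fst p + \<beta> * snd p \<le> \<alpha> * fst p' + \<beta> * snd p'" using main[OF fp'] unfolding L_def .
    assume eq: "\<alpha> * fst p' + \<beta> * snd p' = \<alpha> * fst p + \<beta> * snd p"
    hence "L p' = M" using pL unfolding L_def by simp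
    moreover have "p' \<in> S" using fp' eq pS unfolding S_def L_def by simp
    ultimately have "p' \<in> T" unfolding T_def by simp
    thus "snd p \<le> snd p'" using m2le pm by simp
  qed
qed

lemma key:
  assumes "in_RJ N f" "in_RJ N g" "N > 0" "\<alpha> > 0" "f \<noteq> (\<lambda>_. 0)" "g \<noteq> (\<lambda>_. 0)"
  obtains p q where "f p \<noteq> 0" "g q \<noteq> 0" "fmult f g (p + q) \<noteq> 0"
    "\<And>p'. f p' \<noteq> 0 \<Longrightarrow> \<alpha> * fst p + \<beta> * snd p \<le> \<alpha> * fst p' + \<beta> * snd p'"
    "\<And>q'. g q' \<noteq> 0 \<Longrightarrow> \<alpha> * fst q + \<beta> * snd q \<le> \<alpha> * fst q' + \<beta> * snd q'"
proof -
  obtain p where fp: "f p \<noteq> 0"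
    and pmin: "\<And>p'. f p' \<noteq> 0 \<Longrightarrow> \<alpha> * fst p + \<beta> * snd p \<le> \<alpha> * fst p' + \<beta> * snd p'"
    and psnd: "\<And>p'. f p' \<noteq> 0 \<Longrightarrow> \<alpha> * fst p' + \<beta> * snd p' = \<alpha> * fst p + \<beta> * snd p \<Longrightarrow> snd p \<le> snd p'"
    using min_exists[OF assms(1,3,4,5)] by metis
  obtain q where gq: "g q \<noteq> 0"
    and qmin: "\<And>q'. g q' \<noteq> 0 \<Longrightarrow> \<alpha> * fst q + \<beta> * snd q \<le> \<alpha> * fst q' + \<beta> * snd q'"
    and qsnd: "\<And>q'. g q' \<noteq> 0 \<Longrightarrow> \<alpha> * fst q' + \<beta> * snd q' = \<alpha> * fst q + \<beta> * snd q \<Longrightarrow> snd q \<le> snd q'"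
    using min_exists[OF assms(2,3,4,6)] by metis
  have setq: "{p'. f p' \<noteq> 0 \<and> g (p + q - p') \<noteq> 0} = {p}"
  proof
    show "{p} \<subseteq> {p'. f p' \<noteq> 0 \<and> g (p + q - p') \<noteq> 0}" using fp gq by simp
    show "{p'. f p' \<noteq> 0 \<and> g (p + q - p') \<noteq> 0} \<subseteq> {p}"
    proof
      fix p' assume "p' \<in> {p'. f p' \<noteq> 0 \<and> g (p + q - p') \<noteq> 0}"
      hence f': "f p' \<noteq> 0" and g': "g (p + q - p') \<noteq> 0" by auto
      define q' where "q' = p + q - p'"
      have g'': "g q' \<noteq> 0" using g' unfolding q'_def .
      have fq: "fst q' = fst p + fst q - fst p'" "snd q' = snd p + snd q - snd p'"
        unfolding q'_def by simp_all
      have A1: "\<alpha> * fst p + \<beta> * snd p \<le> \<alpha> * fst p' + \<beta> * snd p'" using pmin[OF f'] .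
      have A2: "\<alpha> * fst q + \<beta> * snd q \<le> \<alpha> * fst q' + \<beta> * snd q'" using qmin[OF g''] .
      have E1: "\<alpha> * fst p' + \<beta> * snd p' = \<alpha> * fst p + \<beta> * snd p"
        using A1 A2 fq by (simp add: algebra_simps)
      have "\<alpha> * fst q' + \<beta> * snd q' = \<alpha> * fst p + \<alpha> * fst q - \<alpha> * fst p' + (\<beta> * snd p + \<beta> * snd q - \<beta> * snd p')"
        unfolding fq by (simp add: algebra_simps)
      hence E2: "\<alpha> * fst q' + \<beta> * snd q' = \<alpha> * fst q + \<beta> * snd q"
        using E1 by linarith
      have "snd p \<le> snd p'" using psnd[OF f' E1] .
      moreover have "snd q \<le> snd q'" using qsnd[OF g'' E2] .
      ultimately have s: "snd p' = snd p" using fq by simp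
      hence "\<alpha> * fst p' = \<alpha> * fst p" using E1 by simp
      hence "fst p' = fst p" using assms(4) by simp
      with s have "p' = p" by (simp add: prod_eq_iff)
      thus "p' \<in> {p}" by simp
    qed
  qed
  have "fmult f g (p + q) = f p * g q" unfolding fmult_def setq by simp
  hence "fmult f g (p + q) \<noteq> 0" using fp gq by simp
  thus ?thesis using that fp gq pmin qmin by blast
qed

lemma inner_pair2: "inner (\<alpha>::real, \<beta>::real) x = \<alpha> * fst x + \<beta> * snd x"
  by (cases x) simp

lemma quad_convex:
  fixes a b c r1 r2 u v :: real
  assumes "a > 0" "u \<ge> 0" "v \<ge> 0" "u + v = 1"
  shows "a * (u * r1 + v * r2)^2 + b * (u * r1 + v * r2) + c \<le> u * (a * r1^2 + b * r1 + c) + v * (a * r2^2 + b * r2 + c)"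
proof -
  have v: "v = 1 - u" using assms(4) by simp
  have "u * (a * r1^2 + b * r1 + c) + v * (a * r2^2 + b * r2 + c) - (a * (u * r1 + v * r2)^2 + b * (u * r1 + v * r2) + c)
        = a * (u * v) * (r1 - r2)^2"
    unfolding v by (simp add: power2_eq_square algebra_simps)
  moreover have "a * (u * v) * (r1 - r2)^2 \<ge> 0" using assms by simp
  ultimately show ?thesis by linarith
qed

definition Preg :: "real \<Rightarrow> real \<Rightarrow> real \<Rightarrow> real \<Rightarrow> (real\<times>real) set" where
  "Preg m a b c = {x. m \<le> fst x \<and> a * (snd x)^2 + b * snd x + c \<le> fst x}"

lemma Preg_closed: "closed (Preg m a b c)"
  unfolding Preg_def by (intro closed_Collect_conj closed_Collect_le continuous_intros)

lemma Preg_convex: assumes "a > 0" shows "convex (Preg m a b c)"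
proof (rule convexI)
  fix x y :: "real \<times> real" and u v :: real
  assume x: "x \<in> Preg m a b c" and y: "y \<in> Preg m a b c" and uv: "0 \<le> u" "0 \<le> v" "u + v = 1"
  have h: "m \<le> fst x" "a * (snd x)^2 + b * snd x + c \<le> fst x" "m \<le> fst y" "a * (snd y)^2 + b * snd y + c \<le> fst y"
    using x y unfolding Preg_def by auto
  have "u * m + v * m \<le> u * fst x + v * fst y" using h uv by (intro add_mono mult_left_mono) auto
  hence 1: "m \<le> u * fst x + v * fst y" using uv(3) by (simp add: distrib_right[symmetric])
  have "u * (a * (snd x)^2 + b * snd x + c) + v * (a * (snd y)^2 + b * snd y + c) \<le> u * fst x + v * fst y"
    using h uv by (intro add_mono mult_left_mono) auto
  hence 2: "a * (u * snd x + v * snd y)\<^sup>2 + b * (u * snd x + v * snd y) + c \<le> u * fst x + v * fst y"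
    using quad_convex[OF assms uv, of "snd x" "snd y" b c] by linarith
  show "u *\<^sub>R x + v *\<^sub>R y \<in> Preg m a b c" unfolding Preg_def using 1 2 by simp
qed

lemma Preg_ray: "x \<in> Preg m a b c \<Longrightarrow> 0 \<le> s \<Longrightarrow> x + (s,0) \<in> Preg m a b c"
  unfolding Preg_def by auto

lemma nu_Preg:
  assumes "in_RJ N f"
  obtains m a b c where "a > 0" "nu_J f \<subseteq> Preg m a b c"
    "\<And>p. f p \<noteq> 0 \<Longrightarrow> m \<le> fst p"
proof -
  obtain m a b c where a: "a > 0" and m: "\<And>p. f p \<noteq> 0 \<Longrightarrow> m \<le> fst p"
    and q: "\<And>p. f p \<noteq> 0 \<Longrightarrow> a * (snd p)^2 + b * snd p + c \<le> fst p"
    using RJ_facts[OF assms] by metis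
  have "nu_J f \<subseteq> Preg m a b c" unfolding nu_J_def
    by (rule nu_sub[OF Preg_closed Preg_convex[OF a] _ Preg_ray])
       (auto simp: supp_def Preg_def intro: m q)
  thus ?thesis using that a m by blast
qed

lemma Preg_bounded:
  assumes "a > 0"
  shows "bounded (Preg m a b c \<inter> {x. fst x \<le> K})"
proof -
  define R where "R = (\<bar>b\<bar> + \<bar>c - K\<bar>) / a + 1"
  have "Preg m a b c \<inter> {x. fst x \<le> K} \<subseteq> {m..K} \<times> {-R..R}"
  proof
    fix x assume "x \<in> Preg m a b c \<inter> {x. fst x \<le> K}"
    then obtain n r where x: "x = (n, r)" and "(n, r) \<in> Preg m a b c" "fst (n, r) \<le> K" by (cases x) auto
    hence h: "m \<le> n" "a * r^2 + b * r + c \<le> n" "n \<le> K" unfolding Preg_def by auto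
    have "a * r^2 + b * r + (c - K) \<le> 0" using h by simp
    hence "\<bar>r\<bar> \<le> R" unfolding R_def using quad_bound[OF assms] by blast
    thus "x \<in> {m..K} \<times> {-R..R}" using h x by (simp add: abs_le_iff)
  qed
  moreover have "bounded ({m..K} \<times> {-R..R})"
    by (intro bounded_Times compact_imp_bounded compact_Icc)
  ultimately show ?thesis by (rule bounded_subset[rotated])
qed

lemma supp_fmult: "supp (fmult f g) \<subseteq> minkowski (nu_J f) (nu_J g)"
proof
  fix x assume "x \<in> supp (fmult f g)"
  hence "fmult f g x \<noteq> 0" by (simp add: supp_def)
  have "{p. f p \<noteq> 0 \<and> g (x - p) \<noteq> 0} \<noteq> {}"
  proof
    assume e: "{p. f p \<noteq> 0 \<and> g (x - p) \<noteq> 0} = {}"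
    have "fmult f g x = 0" unfolding fmult_def by (simp only: e sum.empty)
    thus False using \<open>fmult f g x \<noteq> 0\<close> by simp
  qed
  then obtain p where fp: "f p \<noteq> 0" and gp: "g (x - p) \<noteq> 0" by auto
  have "p \<in> nu_J f" using fp sub_nu[of "supp f"] unfolding nu_J_def by (auto simp: supp_def)
  moreover have "x - p \<in> nu_J g" using gp sub_nu[of "supp g"] unfolding nu_J_def by (auto simp: supp_def)
  moreover have "x = p + (x - p)" by simp
  ultimately show "x \<in> minkowski (nu_J f) (nu_J g)" unfolding minkowski_def by blast
qed

lemma mink_closed:
  assumes "in_RJ N f" "in_RJ N g"
  shows "closed (minkowski (nu_J f) (nu_J g))"
proof -
  obtain mf a b c where a: "a > 0" and Pf: "nu_J f \<subseteq> Preg mf a b c"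
    using nu_Preg[OF assms(1)] by metis
  obtain mg a' b' c' where Pg: "nu_J g \<subseteq> Preg mg a' b' c'"
    using nu_Preg[OF assms(2)] by metis
  let ?M = "minkowski (nu_J f) (nu_J g)"
  have "closure ?M \<subseteq> ?M"
  proof
    fix z assume z: "z \<in> closure ?M"
    define K where "K = fst z + 1"
    define U where "U = {x::real\<times>real. fst x < K}"
    have oU: "open U" unfolding U_def by (intro open_Collect_less continuous_intros)
    have zU: "z \<in> U" unfolding U_def K_def by simp
    define AK where "AK = nu_J f \<inter> {x. fst x \<le> K - mg}"
    have "AK \<subseteq> Preg mf a b c \<inter> {x. fst x \<le> K - mg}" using Pf unfolding AK_def by auto
    hence bAK: "bounded AK" using Preg_bounded[OF a] bounded_subset by blast
    have cAK: "closed AK" unfolding AK_def nu_J_def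
      by (intro closed_Int closed_closure closed_Collect_le continuous_intros)
    have kAK: "compact AK" using bAK cAK by (simp add: compact_eq_bounded_closed)
    have cl: "closed (minkowski AK (nu_J g))" unfolding mink_eq
      by (rule compact_closed_sums[OF kAK]) (simp add: nu_J_def)
    have sub: "U \<inter> ?M \<subseteq> minkowski AK (nu_J g)"
    proof
      fix x assume "x \<in> U \<inter> ?M"
      then obtain u v where x: "x = u + v" and u: "u \<in> nu_J f" and v: "v \<in> nu_J g"
        and xK: "fst x < K" unfolding minkowski_def U_def by blast
      have "mg \<le> fst v" using Pg v unfolding Preg_def by auto
      hence "fst u \<le> K - mg" using xK x by simp
      hence "u \<in> AK" using u unfolding AK_def by simp
      thus "x \<in> minkowski AK (nu_J g)" using x v unfolding minkowski_def by blast
    qed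
    have "z \<in> closure (U \<inter> ?M)" using open_Int_closure_subset[OF oU] z zU by blast
    also have "\<dots> \<subseteq> minkowski AK (nu_J g)" using closure_minimal[OF sub cl] .
    also have "\<dots> \<subseteq> ?M" unfolding minkowski_def AK_def by blast
    finally show "z \<in> ?M" .
  qed
  thus ?thesis using closure_subset_eq by blast
qed

lemma subset_dir:
  assumes "in_RJ N f" "in_RJ N g"
  shows "nu_J (fmult f g) \<subseteq> minkowski (nu_J f) (nu_J g)"
  unfolding nu_J_def[of "fmult f g"]
proof (rule nu_sub[OF mink_closed[OF assms] convex_mink supp_fmult])
  show "convex (nu_J f)" "convex (nu_J g)" unfolding nu_J_def by (rule convex_nu)+
  fix x and s :: real assume "x \<in> minkowski (nu_J f) (nu_J g)" "0 \<le> s"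
  then obtain u v where x: "x = u + v" and u: "u \<in> nu_J f" and v: "v \<in> nu_J g"
    unfolding minkowski_def by blast
  have "u + (s,0) \<in> nu_J f" using nu_ray u \<open>0 \<le> s\<close> unfolding nu_J_def by blast
  moreover have "x + (s,0) = (u + (s,0)) + v" using x by (simp add: algebra_simps)
  ultimately show "x + (s,0) \<in> minkowski (nu_J f) (nu_J g)" using v unfolding minkowski_def by blast
qed

lemma halfspace_nu:
  assumes "\<And>p. p \<in> S \<Longrightarrow> t \<le> inner w p" "0 \<le> fst w" "u \<in> closure (conv_A S)"
  shows "t \<le> inner w u"
proof -
  have "closure (conv_A S) \<subseteq> {x. inner w x \<ge> t}"
  proof (rule nu_sub[OF closed_halfspace_ge convex_halfspace_ge])
    show "S \<subseteq> {x. t \<le> inner w x}" using assms(1) by auto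
    fix x and s :: real assume x: "x \<in> {x. t \<le> inner w x}" and s: "0 \<le> s"
    have "inner w (x + (s,0)) = inner w x + fst w * s"
      by (cases w) (simp add: inner_add_right)
    moreover have "fst w * s \<ge> 0" using assms(2) s by simp
    ultimately show "x + (s,0) \<in> {x. t \<le> inner w x}" using x by simp
  qed
  thus ?thesis using assms(3) by auto
qed

lemma superset_dir:
  assumes N: "N > 0" and f: "in_RJ N f" and g: "in_RJ N g"
    and f0: "f \<noteq> (\<lambda>_. 0)" and g0: "g \<noteq> (\<lambda>_. 0)"
  shows "minkowski (nu_J f) (nu_J g) \<subseteq> nu_J (fmult f g)"
proof
  fix z assume z: "z \<in> minkowski (nu_J f) (nu_J g)"
  show "z \<in> nu_J (fmult f g)"
  proof (rule ccontr)
    let ?S = "nu_J (fmult f g)"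
    assume nz: "z \<notin> ?S"
    have cS: "convex ?S" unfolding nu_J_def by (rule convex_nu)
    have clS: "closed ?S" unfolding nu_J_def by simp
    obtain w t where wz: "inner w z < t" and wS: "\<And>x. x \<in> ?S \<Longrightarrow> inner w x > t"
      using separating_hyperplane_closed_point[OF cS clS nz] by blast
    obtain \<alpha> \<beta> where w: "w = (\<alpha>, \<beta>)" by (cases w)
    have Lw: "\<And>x. inner w x = \<alpha> * fst x + \<beta> * snd x" unfolding w by (rule inner_pair2)
    have inS: "x \<in> ?S" if "fmult f g x \<noteq> 0" for x
      using that sub_nu[of "supp (fmult f g)"] unfolding nu_J_def by (auto simp: supp_def)
    obtain p0 q0 where x0: "fmult f g (p0 + q0) \<noteq> 0"
      using key[OF f g N, of 1 0, OF zero_less_one f0 g0] by metis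
    have x0S: "p0 + q0 \<in> ?S" using inS[OF x0] .
    have a0: "\<alpha> \<ge> 0"
    proof (rule ccontr)
      assume "\<not> \<alpha> \<ge> 0"
      hence an: "\<alpha> < 0" by simp
      define s where "s = (inner w (p0 + q0) - t) / (- \<alpha>)"
      have s0: "s \<ge> 0" unfolding s_def using wS[OF x0S] an by (intro divide_nonneg_pos) auto
      have "p0 + q0 + (s,0) \<in> ?S" using nu_ray[OF _ s0] x0S unfolding nu_J_def by blast
      hence "inner w (p0 + q0 + (s,0)) > t" by (rule wS)
      moreover have "inner w (p0 + q0 + (s,0)) = inner w (p0 + q0) + \<alpha> * s"
        unfolding w by (simp add: inner_add_right)
      moreover have "\<alpha> * s = t - inner w (p0 + q0)" unfolding s_def using an by (simp add: field_simps)
      ultimately show False by simp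
    qed
    obtain mf where mf: "\<And>p. f p \<noteq> 0 \<Longrightarrow> mf \<le> fst p" using nu_Preg[OF f] by metis
    obtain mg where mg: "\<And>p. g p \<noteq> 0 \<Longrightarrow> mg \<le> fst p" using nu_Preg[OF g] by metis
    have pair: "t \<le> inner w u' + inner w v'" if fu: "f u' \<noteq> 0" and gv: "g v' \<noteq> 0" for u' v'
    proof (rule ccontr)
      assume "\<not> t \<le> inner w u' + inner w v'"
      define d where "d = t - (inner w u' + inner w v')"
      have d0: "d > 0" using \<open>\<not> t \<le> _\<close> unfolding d_def by simp
      define D where "D = (fst u' - mf) + (fst v' - mg)"
      have D0: "D \<ge> 0" unfolding D_def using mf[OF fu] mg[OF gv] by simp
      define \<epsilon> where "\<epsilon> = d / (D + 1)"
      have e0: "\<epsilon> > 0" unfolding \<epsilon>_def using d0 D0 by simp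
      have eD: "\<epsilon> * D < d" unfolding \<epsilon>_def using d0 D0 by (simp add: field_simps)
      obtain p q where fp: "f p \<noteq> 0" and gq: "g q \<noteq> 0" and pq: "fmult f g (p + q) \<noteq> 0"
        and pmin: "(\<alpha> + \<epsilon>) * fst p + \<beta> * snd p \<le> (\<alpha> + \<epsilon>) * fst u' + \<beta> * snd u'"
        and qmin: "(\<alpha> + \<epsilon>) * fst q + \<beta> * snd q \<le> (\<alpha> + \<epsilon>) * fst v' + \<beta> * snd v'"
        using key[OF f g N, of "\<alpha> + \<epsilon>" \<beta>] a0 e0 f0 g0 fu gv by (metis add_nonneg_pos)
      have "inner w (p + q) > t" using wS[OF inS[OF pq]] .
      hence 1: "t < \<alpha> * fst p + \<beta> * snd p + (\<alpha> * fst q + \<beta> * snd q)" unfolding Lw by (simp add: algebra_simps)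
      have "\<epsilon> * mf \<le> \<epsilon> * fst p" using mf[OF fp] e0 by simp
      hence 2: "\<alpha> * fst p + \<beta> * snd p \<le> \<alpha> * fst u' + \<beta> * snd u' + \<epsilon> * (fst u' - mf)"
        using pmin by (simp add: algebra_simps)
      have "\<epsilon> * mg \<le> \<epsilon> * fst q" using mg[OF gq] e0 by simp
      hence 3: "\<alpha> * fst q + \<beta> * snd q \<le> \<alpha> * fst v' + \<beta> * snd v' + \<epsilon> * (fst v' - mg)"
        using qmin by (simp add: algebra_simps)
      have "\<epsilon> * D = \<epsilon> * (fst u' - mf) + \<epsilon> * (fst v' - mg)" unfolding D_def by (simp add: algebra_simps)
      with 1 2 3 eD show False unfolding d_def Lw by linarith
    qed
    from z obtain u v where zuv: "z = u + v" and u: "u \<in> nu_J f" and v: "v \<in> nu_J g"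
      unfolding minkowski_def by blast
    have fw: "0 \<le> fst w" using a0 w by simp
    have hu: "t - inner w v' \<le> inner w u" if gv: "g v' \<noteq> 0" for v'
    proof (rule halfspace_nu[OF _ fw u[unfolded nu_J_def]])
      fix p assume "p \<in> supp f"
      hence "f p \<noteq> 0" by (simp add: supp_def)
      from pair[OF this gv] show "t - inner w v' \<le> inner w p" by simp
    qed
    have "t - inner w u \<le> inner w v"
    proof (rule halfspace_nu[OF _ fw v[unfolded nu_J_def]])
      fix p assume "p \<in> supp g"
      hence "g p \<noteq> 0" by (simp add: supp_def)
      from hu[OF this] show "t - inner w u \<le> inner w p" by simp
    qed
    hence "t \<le> inner w z" unfolding zuv by (simp add: inner_add_right)
    with wz show False by simp
  qed
qed

theorem theorem4p5:
  fixes N :: nat and f g :: fseries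
  assumes "N > 0"
    and "in_RJ N f" and "in_RJ N g"
    and "f \<noteq> (\<lambda>_. 0)" and "g \<noteq> (\<lambda>_. 0)"
  shows "nu_J (fmult f g) = minkowski (nu_J f) (nu_J g)"
  using subset_dir[OF assms(2,3)] superset_dir[OF assms] by (rule antisym)

end
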